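(* Let $n\ge 3$ be an integer, $r\in\mathbb R$, and define $G_n(x;r)=\bigl((-1)^{n+1}\psi_2^{(n)}(x)\bigr)^r$ for $x>0$. Then: (1) $x\mapsto G_n(x;r)$ is strictly convex on $(0,\infty)$ for $r\in\left(-\infty,-\frac{1}{n-1}\right)\cup(0,\infty)$, and strictly concave on $(0,\infty)$ for $r\in\left(-\frac{1}{n+1},0\right)$. (2) For $r\in\left(-\infty,-\frac{1}{n-1}\right)$ and all $x,y>0$, $$\bigl((-1)^{n+1}\psi_2^{(n)}(x)\bigr)^r+\bigl((-1)^{n+1}\psi_2^{(n)}(y)\bigr)^r<\bigl((-1)^{n+1}\psi_2^{(n)}(x+y)\bigr)^r.$$ (3) For $r\in\left(-\frac{1}{n+1},0\right)$ and all $x,y>0$, $$\bigl((-1)^{n+1}\psi_2^{(n)}(x)\bigr)^r+\bigl((-1)^{n+1}\psi_2^{(n)}(y)\bigr)^r>\bigl((-1)^{n+1}\psi_2^{(n)}(x+y)\bigr)^r.$$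
   Context: For an integer $n\ge 2$ and $x>0$, the poly-double gamma function is defined by $$\psi_2^{(n)}(x)=(-1)^{n+1}\,n!\sum_{k=0}^{\infty}\frac{1+k}{(x+k)^{n+1}} .$$ Note that $(-1)^{n+1}\psi_2^{(n)}(x)>0$ for $x>0$. *)

theory Defs
  imports "HOL-Analysis.Analysis"
begin

definition psi2 :: "nat \<Rightarrow> real \<Rightarrow> real" where
  "psi2 n x = (-1) ^ (n + 1) * fact n * (\<Sum>k. (1 + real k) / (x + real k) ^ (n + 1))"

definition G :: "nat \<Rightarrow> real \<Rightarrow> real \<Rightarrow> real" where
  "G n r x = ((-1) ^ (n + 1) * psi2 n x) powr r"

definition strictly_convex_on :: "real set \<Rightarrow> (real \<Rightarrow> real) \<Rightarrow> bool" where
  "strictly_convex_on S f \<longleftrightarrow> convex S \<and>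
    (\<forall>x\<in>S. \<forall>y\<in>S. \<forall>t. x \<noteq> y \<longrightarrow> 0 < t \<longrightarrow> t < 1 \<longrightarrow>
       f ((1 - t) * x + t * y) < (1 - t) * f x + t * f y)"

definition strictly_concave_on :: "real set \<Rightarrow> (real \<Rightarrow> real) \<Rightarrow> bool" where
  "strictly_concave_on S f \<longleftrightarrow> strictly_convex_on S (\<lambda>x. - f x)"

end

theory Submission
  imports Defs "HOL-Probability.Distributions"
begin

definition S :: "nat \<Rightarrow> real \<Rightarrow> real" where
  "S j x = (\<Sum>k. (1 + real k) / (x + real k) ^ j)"

lemma summable_S:
  assumes "x > 0" "j \<ge> 3"
  shows "summable (\<lambda>k. (1 + real k) / (x + real k) ^ j)"
proof (rule summable_comparison_test')
  show "summable (\<lambda>k. 2 * inverse (real k ^ 2))" 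
    by (intro summable_mult inverse_power_summable) simp
  fix k :: nat assume k: "k \<ge> 1"
  have k1: "real k \<ge> 1" using k by simp
  have "real k ^ 3 \<le> real k ^ j" using k1 assms(2) by (intro power_increasing) auto
  also have "\<dots> \<le> (x + real k) ^ j" using assms by (intro power_mono) auto
  finally have p: "real k ^ 3 \<le> (x + real k) ^ j" .
  have pos: "0 < real k ^ 3" using k1 by simp
  have "(1 + real k) / (x + real k) ^ j \<le> (2 * real k) / real k ^ 3"
    using p pos k1 by (intro frac_le) auto
  also have "\<dots> = 2 * inverse (real k ^ 2)" using k1 by (simp add: power_eq_if field_simps)
  finally show "norm ((1 + real k) / (x + real k) ^ j) \<le> 2 * inverse (real k ^ 2)"
    using assms by simp
qed

lemma S_pos: assumes "x > 0" "j \<ge> 3" shows "S j x > 0"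
proof -
  have "0 < (1 + real 0) / (x + real 0) ^ j" using assms by simp
  also have "\<dots> \<le> S j x" unfolding S_def
    using summable_S[OF assms] assms
    by (intro sum_le_suminf[where I="{0}", simplified]) auto
  finally show ?thesis .
qed

lemma S_ge_first: assumes "x > 0" "j \<ge> 3" shows "S j x \<ge> 1 / x ^ j"
proof -
  have "1 / x ^ j = (1 + real 0) / (x + real 0) ^ j" by simp
  also have "\<dots> \<le> S j x" unfolding S_def
    using summable_S[OF assms] assms
    by (intro sum_le_suminf[where I="{0}", simplified]) auto
  finally show ?thesis .
qed

lemma aux_alg: "(z::real) \<noteq> 0 \<Longrightarrow> (0 * z ^ Suc i - (1 + real k) * (real (Suc i) * z ^ i)) / (z ^ Suc i * z ^ Suc i)
            = - real (Suc i) * ((1 + real k) / z ^ Suc (Suc i))"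
  apply (simp add: divide_simps)
  apply (simp add: algebra_simps)
  done

lemma DERIV_term:
  assumes "y > 0"
  shows "((\<lambda>y. (1 + real k) / (y + real k) ^ j) has_real_derivative
           (- real j * ((1 + real k) / (y + real k) ^ Suc j))) (at y)"
proof -
  have ne: "y + real k \<noteq> 0" using assms by simp
  have d1: "((\<lambda>y. (y + real k) ^ j) has_real_derivative (real j * (y + real k) ^ (j - 1))) (at y)"
    by (auto intro!: derivative_eq_intros)
  show ?thesis
  proof (rule DERIV_cong[OF DERIV_divide[OF DERIV_const[of "1 + real k"] d1]])
    show "(0 * (y + real k) ^ j - (1 + real k) * (real j * (y + real k) ^ (j - 1))) /
          ((y + real k) ^ j * (y + real k) ^ j) = - real j * ((1 + real k) / (y + real k) ^ Suc j)"
    proof (cases j)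
      case (Suc i)
      have "(0 * (y + real k) ^ Suc i - (1 + real k) * (real (Suc i) * (y + real k) ^ i)) / ((y + real k) ^ Suc i * (y + real k) ^ Suc i)
            = - real (Suc i) * ((1 + real k) / (y + real k) ^ Suc (Suc i))"
        using ne by (rule aux_alg)
      then show ?thesis using Suc by simp
    qed simp
  qed (use ne in simp)
qed

lemma DERIV_S:
  assumes "x > 0" "j \<ge> 3"
  shows "(S j has_real_derivative (- real j * S (Suc j) x)) (at x)"
proof -
  let ?A = "{x/2<..}"
  have "((\<lambda>y. \<Sum>k. (1 + real k) / (y + real k) ^ j) has_field_derivative
        (\<Sum>k. - real j * ((1 + real k) / (x + real k) ^ Suc j))) (at x)"
  proof (rule has_field_derivative_series'(2)[where S="?A" and x0=x])
    show "convex ?A" by simp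
    show "x \<in> interior ?A" using assms by (simp add: interior_open)
    show "x \<in> ?A" using assms by simp
    show "summable (\<lambda>k. (1 + real k) / (x + real k) ^ j)" by (rule summable_S[OF assms])
    fix k y assume "y \<in> ?A"
    hence "y > 0" using assms by simp
    thus "((\<lambda>y. (1 + real k) / (y + real k) ^ j) has_real_derivative
           (- real j * ((1 + real k) / (y + real k) ^ Suc j))) (at y within ?A)"
      by (rule has_field_derivative_at_within[OF DERIV_term])
  next
    show "uniformly_convergent_on ?A (\<lambda>n y. \<Sum>k<n. - real j * ((1 + real k) / (y + real k) ^ Suc j))"
    proof (rule Weierstrass_m_test')
      show "summable (\<lambda>k. real j * ((1 + real k) / (x/2 + real k) ^ Suc j))"
        using assms by (intro summable_mult[OF summable_S]) auto
      fix k y assume "y \<in> ?A"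
      hence y: "y > x/2" by simp
      have "(x/2 + real k) ^ Suc j \<le> (y + real k) ^ Suc j"
        using y assms by (intro power_mono) auto
      hence "(1 + real k) / (y + real k) ^ Suc j \<le> (1 + real k) / (x/2 + real k) ^ Suc j"
        using assms y by (intro divide_left_mono) auto
      moreover have pos: "0 \<le> (1 + real k) / (y + real k) ^ Suc j" using y assms by simp
      ultimately show "norm (- real j * ((1 + real k) / (y + real k) ^ Suc j))
             \<le> real j * ((1 + real k) / (x/2 + real k) ^ Suc j)"
        by (metis abs_mult abs_minus_cancel abs_of_nat abs_of_nonneg[OF pos] mult_left_mono of_nat_0_le_iff real_norm_def)
    qed
  qed
  also have "(\<Sum>k. - real j * ((1 + real k) / (x + real k) ^ Suc j)) = - real j * S (Suc j) x"
    unfolding S_def using assms by (intro suminf_mult[OF summable_S]) auto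
  finally show ?thesis unfolding S_def[abs_def] .
qed


definition w :: "real \<Rightarrow> real" where "w t = 1 / (1 - exp (- t))^2"

lemma series_w:
  assumes "t > 0"
  shows "(\<lambda>k. (1 + real k) * exp (- (real k * t))) sums w t"
proof -
  have "norm (exp (- t)) < 1" using assms by simp
  from geometric_deriv_sums[OF this] have "(\<lambda>n. of_nat (Suc n) * exp (- t) ^ n) sums (1 / (1 - exp (- t))^2)" .
  moreover have "\<And>n. exp (- t) ^ n = exp (- (real n * t))"
    by (metis exp_of_nat_mult mult_minus_right)
  ultimately show ?thesis unfolding w_def by (simp add: add.commute)
qed

lemma exp_moment_nn:
  fixes l :: real
  assumes "l > 0" "j \<ge> 1"
  shows "(\<integral>\<^sup>+t. ennreal (indicator {0<..} t * (t ^ j * exp (- (l * t)))) \<partial>lborel) = ennreal (fact j / l ^ Suc j)"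
proof -
  have eq: "indicator {0<..} t * (t ^ j * exp (- (l * t))) = (1 / l) * (erlang_density 0 l t * t ^ j)" for t
    using assms by (cases "t > 0") (auto simp: erlang_density_def indicator_def)
  have "(\<integral>\<^sup>+t. ennreal (indicator {0<..} t * (t ^ j * exp (- (l * t)))) \<partial>lborel)
        = (\<integral>\<^sup>+t. ennreal (1 / l) * ennreal (erlang_density 0 l t * t ^ j) \<partial>lborel)"
    unfolding eq
  proof (intro nn_integral_cong)
    fix t :: real
    have "0 \<le> erlang_density 0 l t * t ^ j"
      using assms by (cases "t < 0") (auto simp: erlang_density_def)
    thus "ennreal (1 / l * (erlang_density 0 l t * t ^ j)) = ennreal (1 / l) * ennreal (erlang_density 0 l t * t ^ j)"
      using assms by (intro ennreal_mult) auto
  qed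
  also have "\<dots> = ennreal (1 / l) * (\<integral>\<^sup>+t. ennreal (erlang_density 0 l t * t ^ j) \<partial>lborel)"
    by (rule nn_integral_cmult) measurable
  also have "\<dots> = ennreal (1 / l) * ennreal (fact j / l ^ j)"
    using nn_integral_erlang_ith_moment[OF assms(1), of 0 j] by simp
  also have "\<dots> = ennreal (fact j / l ^ Suc j)"
    using assms by (simp add: ennreal_mult[symmetric])
  finally show ?thesis .
qed

lemma exp_moment:
  fixes l c :: real
  assumes "l > 0" "j \<ge> 1" "c \<ge> 0"
  shows "has_bochner_integral lborel (\<lambda>t. indicator {0<..} t * (t ^ j * (c * exp (- (l * t))))) (c * fact j / l ^ Suc j)"
proof (rule has_bochner_integral_nn_integral)
  show "(\<lambda>t. indicator {0<..} t * (t ^ j * (c * exp (- (l * t))))) \<in> borel_measurable lborel" by measurable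
  show "AE t in lborel. 0 \<le> indicator {0<..} t * (t ^ j * (c * exp (- (l * t))))"
    using assms by (intro AE_I2) (auto simp: indicator_def)
  show "0 \<le> c * fact j / l ^ Suc j" using assms by simp
  have eq: "ennreal (indicator {0<..} t * (t ^ j * (c * exp (- (l * t))))) =
      ennreal c * ennreal (indicator {0<..} t * (t ^ j * exp (- (l * t))))" for t
    using assms by (auto simp: indicator_def ennreal_mult[symmetric] mult_ac)
  have "(\<integral>\<^sup>+t. ennreal (indicator {0<..} t * (t ^ j * (c * exp (- (l * t))))) \<partial>lborel)
      = ennreal c * (\<integral>\<^sup>+t. ennreal (indicator {0<..} t * (t ^ j * exp (- (l * t)))) \<partial>lborel)"
    unfolding eq by (rule nn_integral_cmult) measurable
  also have "\<dots> = ennreal (c * fact j / l ^ Suc j)"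
    using assms by (simp add: exp_moment_nn ennreal_mult[symmetric])
  finally show "(\<integral>\<^sup>+t. ennreal (indicator {0<..} t * (t ^ j * (c * exp (- (l * t))))) \<partial>lborel) = ennreal (c * fact j / l ^ Suc j)" .
qed

lemma w_moment:
  assumes "x > 0" "j \<ge> 2"
  shows "has_bochner_integral lborel (\<lambda>t. indicator {0<..} t * (t ^ j * exp (- (x * t)) * w t)) (fact j * S (Suc j) x)"
proof (rule has_bochner_integral_nn_integral)
  show "(\<lambda>t. indicator {0<..} t * (t ^ j * exp (- (x * t)) * w t)) \<in> borel_measurable lborel"
    unfolding w_def by measurable
  show "AE t in lborel. 0 \<le> indicator {0<..} t * (t ^ j * exp (- (x * t)) * w t)"
    using assms by (intro AE_I2) (auto simp: indicator_def w_def)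
  have sumS: "summable (\<lambda>k. (1 + real k) / (x + real k) ^ Suc j)" using assms by (intro summable_S) auto
  show "0 \<le> fact j * S (Suc j) x" using S_pos[of x "Suc j"] assms by simp
  define f where "f k t = indicator {0<..} t * ((1 + real k) * (t ^ j * exp (- ((x + real k) * t))))" for k t
  have ptw: "ennreal (indicator {0<..} t * (t ^ j * exp (- (x * t)) * w t)) = (\<Sum>k. ennreal (f k t))" for t
  proof (cases "t > 0")
    case True
    have "(\<lambda>k. (t ^ j * exp (- (x * t))) * ((1 + real k) * exp (- (real k * t)))) sums ((t ^ j * exp (- (x * t))) * w t)"
      by (rule sums_mult[OF series_w[OF True]])
    moreover have "(t ^ j * exp (- (x * t))) * ((1 + real k) * exp (- (real k * t))) = f k t" for k
      using True by (simp add: f_def exp_add[symmetric] algebra_simps)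
    ultimately have s: "(\<lambda>k. f k t) sums (t ^ j * exp (- (x * t)) * w t)" by simp
    have "(\<Sum>k. ennreal (f k t)) = ennreal (\<Sum>k. f k t)"
      using s True by (intro suminf_ennreal2) (auto simp: f_def sums_iff)
    thus ?thesis using s True by (simp add: sums_iff)
  qed (simp add: f_def)
  have "(\<integral>\<^sup>+t. ennreal (indicator {0<..} t * (t ^ j * exp (- (x * t)) * w t)) \<partial>lborel)
      = (\<integral>\<^sup>+t. (\<Sum>k. ennreal (f k t)) \<partial>lborel)" by (simp add: ptw)
  also have "\<dots> = (\<Sum>k. \<integral>\<^sup>+t. ennreal (f k t) \<partial>lborel)"
    by (rule nn_integral_suminf) (simp add: f_def)
  also have "\<dots> = (\<Sum>k. ennreal (fact j * ((1 + real k) / (x + real k) ^ Suc j)))"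
  proof (rule suminf_cong)
    fix k
    have "has_bochner_integral lborel (f k) ((1 + real k) * fact j / (x + real k) ^ Suc j)"
      unfolding f_def using exp_moment[of "x + real k" j "1 + real k"] assms by (simp add: mult_ac)
    hence "(\<integral>\<^sup>+t. ennreal (f k t) \<partial>lborel) = ennreal ((1 + real k) * fact j / (x + real k) ^ Suc j)"
      by (subst nn_integral_eq_integral) (auto simp: has_bochner_integral_iff f_def indicator_def)
    thus "(\<integral>\<^sup>+t. ennreal (f k t) \<partial>lborel) = ennreal (fact j * ((1 + real k) / (x + real k) ^ Suc j))"
      by (simp add: field_simps)
  qed
  also have "\<dots> = ennreal (\<Sum>k. fact j * ((1 + real k) / (x + real k) ^ Suc j))"
    using assms sumS by (intro suminf_ennreal2 summable_mult) auto
  also have "\<dots> = ennreal (fact j * S (Suc j) x)"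
    unfolding S_def using suminf_mult[OF sumS, of "fact j"] by simp
  finally show "(\<integral>\<^sup>+t. ennreal (indicator {0<..} t * (t ^ j * exp (- (x * t)) * w t)) \<partial>lborel) = ennreal (fact j * S (Suc j) x)" .
qed


definition ell :: "real \<Rightarrow> real" where "ell t = ln t - ln (1 - exp (- t))"

lemma ell_deriv:
  assumes "t > 0"
  shows "(ell has_real_derivative (1 / t - 1 / (exp t - 1))) (at t)"
proof -
  have e: "exp (- t) < 1" using assms by simp
  have e1: "exp t > 1" using assms by simp
  have "(ell has_real_derivative (1 / t - (exp (- t)) / (1 - exp (- t)))) (at t)"
    unfolding ell_def[abs_def] using assms e
    by (auto intro!: derivative_eq_intros simp: field_simps)
  moreover have "exp (- t) / (1 - exp (- t)) = 1 / (exp t - 1)"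
    using e1 by (simp add: exp_minus field_simps)
  ultimately show ?thesis by simp
qed

lemma ell'_deriv:
  fixes t :: real
  assumes "t > 0"
  shows "((\<lambda>t. 1 / t - 1 / (exp t - 1)) has_real_derivative (- 1 / t^2 + exp t / (exp t - 1)^2)) (at t)"
  using assms by (auto intro!: derivative_eq_intros simp: field_simps power2_eq_square)

lemma sq_exp_ineq:
  fixes t :: real
  assumes "t > 0"
  shows "t^2 * exp t \<le> (exp t - 1)^2"
proof -
  have "t/2 \<le> (exp (t/2) - inverse (exp (t/2))) / 2" using assms by (intro real_le_x_sinh) simp
  hence "t \<le> exp (t/2) - inverse (exp (t/2))" by simp
  hence "t * exp (t/2) \<le> (exp (t/2) - inverse (exp (t/2))) * exp (t/2)"
    by (intro mult_right_mono) auto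
  also have "\<dots> = exp t - 1"
    by (simp add: algebra_simps exp_add[symmetric])
  finally have h: "t * exp (t/2) \<le> exp t - 1" .
  have "t^2 * exp t = (t * exp (t/2))^2"
    by (simp add: power2_eq_square exp_add[symmetric] algebra_simps)
  also have "\<dots> \<le> (exp t - 1)^2" using h assms by (intro power_mono) auto
  finally show ?thesis .
qed

lemma ell_concave: "concave_on {0<..} ell"
proof (rule f''_le0_imp_concave[where f' = "\<lambda>t. 1 / t - 1 / (exp t - 1)" and f'' = "\<lambda>t. - 1 / t^2 + exp t / (exp t - 1)^2"])
  show "convex {0::real<..}" by simp
  fix t :: real assume "t \<in> {0<..}"
  hence t: "t > 0" by simp
  show "(ell has_real_derivative (1 / t - 1 / (exp t - 1))) (at t)" by (rule ell_deriv[OF t])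
  show "((\<lambda>t. 1 / t - 1 / (exp t - 1)) has_real_derivative (- 1 / t^2 + exp t / (exp t - 1)^2)) (at t)"
    by (rule ell'_deriv[OF t])
  have e1: "exp t - 1 > 0" using t by simp
  have "exp t / (exp t - 1)^2 \<le> 1 / t^2"
    using sq_exp_ineq[OF t] e1 t by (simp add: divide_simps mult.commute)
  thus "- 1 / t^2 + exp t / (exp t - 1)^2 \<le> 0" by simp
qed


lemma interval_bdd:
  fixes P :: "real set"
  assumes sub: "P \<subseteq> {0<..}" and ne: "P \<noteq> {}" and bdd: "bdd_above P"
    and convA: "\<forall>p1\<in>P. \<forall>p2\<in>P. \<forall>t. p1 \<le> t \<longrightarrow> t \<le> p2 \<longrightarrow> t \<in> P"
  shows "0 \<le> Inf P" "Inf P \<le> Sup P"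
    "\<And>t. Inf P < t \<Longrightarrow> t < Sup P \<Longrightarrow> t \<in> P"
    "\<And>t. t < Inf P \<Longrightarrow> t \<notin> P" "\<And>t. Sup P < t \<Longrightarrow> t \<notin> P"
proof -
  have bb: "bdd_below P" using sub by (intro bdd_belowI[of _ 0]) auto
  obtain p where p: "p \<in> P" using ne by auto
  show "0 \<le> Inf P" using sub ne by (intro cInf_greatest) auto
  show "Inf P \<le> Sup P" using cInf_lower[OF p bb] cSup_upper[OF p bdd] by simp
  fix t
  { assume "Inf P < t" "t < Sup P"
    then obtain p1 where p1: "p1 \<in> P" "p1 < t" using cInf_less_iff[OF ne bb] by auto
    obtain p2 where p2: "p2 \<in> P" "t < p2" using less_cSup_iff[OF ne bdd] \<open>t < Sup P\<close> by auto
    show "t \<in> P" using convA p1(1) p2(1) less_imp_le[OF p1(2)] less_imp_le[OF p2(2)] by blast }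
  { assume "t < Inf P" thus "t \<notin> P" using cInf_lower[OF _ bb, of t] by linarith }
  { assume "Sup P < t" thus "t \<notin> P" using cSup_upper[OF _ bdd, of t] by linarith }
qed

lemma interval_unbdd:
  fixes P :: "real set"
  assumes sub: "P \<subseteq> {0<..}" and ne: "P \<noteq> {}" and bdd: "\<not> bdd_above P"
    and convA: "\<forall>p1\<in>P. \<forall>p2\<in>P. \<forall>t. p1 \<le> t \<longrightarrow> t \<le> p2 \<longrightarrow> t \<in> P"
  shows "0 \<le> Inf P" "\<And>t. Inf P < t \<Longrightarrow> t \<in> P" "\<And>t. t < Inf P \<Longrightarrow> t \<notin> P"
proof -
  have bb: "bdd_below P" using sub by (intro bdd_belowI[of _ 0]) auto
  show "0 \<le> Inf P" using sub ne by (intro cInf_greatest) auto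
  fix t
  { assume "Inf P < t"
    then obtain p1 where p1: "p1 \<in> P" "p1 < t" using cInf_less_iff[OF ne bb] by auto
    obtain p2 where p2: "p2 \<in> P" "t < p2" using bdd unfolding bdd_above_def by (meson not_le)
    show "t \<in> P" using convA p1(1) p2(1) less_imp_le[OF p1(2)] less_imp_le[OF p2(2)] by blast }
  { assume "t < Inf P" thus "t \<notin> P" using cInf_lower[OF _ bb, of t] by linarith }
qed


lemma hard:
  fixes q :: nat and x :: real
  assumes q: "q \<ge> 2" and x: "x > 0"
  shows "real q * real (q+3) * (S (q+2) x * S (q+4) x) \<le> real (q+1) * real (q+2) * S (q+3) x ^ 2"
proof -
  obtain p where qp: "q = Suc p" and p1: "p \<ge> 1" using q by (cases q) auto
  define M0 where "M0 = fact (q+1) * S (q+2) x"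
  define M1 where "M1 = fact (q+2) * S (q+3) x"
  define M2 where "M2 = fact (q+3) * S (q+4) x"
  have S2: "S (q+2) x > 0" "S (q+3) x > 0" "S (q+4) x > 0" using S_pos x q by auto
  have Mp: "M0 > 0" "M1 > 0" "M2 > 0" unfolding M0_def M1_def M2_def using S2 by auto
  define \<alpha> where "\<alpha> = real q * M0 / M1"
  define \<beta> where "\<beta> = M0 * \<alpha> ^ q / fact (q - 1)"
  have \<alpha>p: "\<alpha> > 0" unfolding \<alpha>_def using Mp q by simp
  have \<beta>p: "\<beta> > 0" unfolding \<beta>_def using Mp \<alpha>p by simp
  define Gf where "Gf t = t^2 * exp (- (x*t)) * w t" for t
  define \<phi> where "\<phi> t = \<beta> * exp (- (\<alpha> * t))" for t
  define IG where "IG i t = indicator {0<..} t * (t ^ (q+1+i) * exp (- (x * t)) * w t)" for i t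
  define IP where "IP i t = indicator {0<..} t * (t ^ (q-1+i) * (\<beta> * exp (- (\<alpha> * t))))" for i t
  have HG: "has_bochner_integral lborel (IG i) (fact (q+1+i) * S (q+2+i) x)" for i
    unfolding IG_def using w_moment[of x "q+1+i"] x q by simp
  have HP: "has_bochner_integral lborel (IP i) (\<beta> * fact (q-1+i) / \<alpha> ^ Suc (q-1+i))" for i
    unfolding IP_def using exp_moment[of \<alpha> "q-1+i" \<beta>] \<alpha>p \<beta>p q by simp
  have HG0: "has_bochner_integral lborel (IG 0) M0" using HG[of 0] by (simp add: M0_def)
  have HG1: "has_bochner_integral lborel (IG 1) M1" using HG[of 1] by (simp add: M1_def numeral_3_eq_3)
  have HG2: "has_bochner_integral lborel (IG 2) M2" using HG[of 2] by (simp add: M2_def eval_nat_numeral)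
  have N0: "\<beta> * fact (q-1+0) / \<alpha> ^ Suc (q-1+0) = M0"
    unfolding \<beta>_def using \<alpha>p qp by (simp add: field_simps)
  have N1: "\<beta> * fact (q-1+1) / \<alpha> ^ Suc (q-1+1) = M1"
  proof -
    have e1: "q - 1 + 1 = q" using q by simp
    have "\<beta> * fact q / \<alpha> ^ Suc q = M0 * real q / \<alpha>"
      unfolding \<beta>_def using qp \<alpha>p by (simp add: field_simps)
    also have "\<dots> = M1"
      unfolding \<alpha>_def using Mp q by (simp add: field_simps)
    finally show ?thesis using e1 by simp
  qed
  have N2: "\<beta> * fact (q-1+2) / \<alpha> ^ Suc (q-1+2) = real (q+1) * M1^2 / (real q * M0)"
  proof -
    have e1: "q - 1 + 2 = Suc q" using q by simp
    have "\<beta> * fact (Suc q) / \<alpha> ^ Suc (Suc q) = M0 * (real q * real (q+1)) / \<alpha>^2"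
      unfolding \<beta>_def using qp \<alpha>p by (simp add: field_simps power2_eq_square)
    also have "\<dots> = real (q+1) * M1^2/(real q * M0)"
      unfolding \<alpha>_def using Mp q by (simp add: field_simps power2_eq_square)
    finally show ?thesis using e1 by simp
  qed
  have HP0: "has_bochner_integral lborel (IP 0) M0" using HP[of 0] N0 by simp
  have HP1: "has_bochner_integral lborel (IP 1) M1" using HP[of 1] N1 by simp
  have HP2: "has_bochner_integral lborel (IP 2) (real (q+1) * M1^2 / (real q * M0))" using HP[of 2] N2 by simp

  have Gf_exp: "Gf t = exp (2 * ell t - x * t)" if "t > 0" for t
  proof -
    have u: "1 - exp (- t) > 0" using that by simp
    have "exp (2 * ell t - x * t) = exp (ln t) ^ 2 / exp (ln (1 - exp (- t))) ^ 2 * exp (- (x * t))"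
      unfolding ell_def by (simp add: exp_diff exp_add power2_eq_square exp_minus field_simps flip: exp_add)
    also have "\<dots> = Gf t" using that u by (simp add: Gf_def w_def)
    finally show ?thesis by simp
  qed
  have phi_exp: "\<phi> t = exp (ln \<beta> - \<alpha> * t)" for t
    using \<beta>p by (simp add: \<phi>_def exp_diff exp_minus field_simps)
  define L where "L t = 2 * ell t - x * t - (ln \<beta> - \<alpha> * t)" for t
  have iffL: "\<phi> t < Gf t \<longleftrightarrow> L t > 0" if "t > 0" for t
    using that by (simp add: Gf_exp phi_exp L_def)
  define P where "P = {t. 0 < t \<and> \<phi> t < Gf t}"
  have Psub: "P \<subseteq> {0<..}" by (auto simp: P_def)
  have conv: "t \<in> P" if p1: "p1 \<in> P" and p2: "p2 \<in> P" and le: "p1 \<le> t" "t \<le> p2" for p1 p2 t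
  proof (cases "p1 = p2")
    case True thus ?thesis using le p1 by simp
  next
    case False
    hence lt: "p1 < p2" using le by simp
    have pos: "p1 > 0" "p2 > 0" using p1 p2 by (auto simp: P_def)
    have L1: "L p1 > 0" "L p2 > 0" using p1 p2 iffL by (auto simp: P_def)
    define th where "th = (t - p1) / (p2 - p1)"
    have th: "0 \<le> th" "th \<le> 1" using le lt by (auto simp: th_def divide_simps)
    have d: "th * (p2 - p1) = t - p1" using lt by (simp add: th_def)
    have teq: "t = (1 - th) * p1 + th * p2" using d by (simp add: algebra_simps; linarith)
    have "ell ((1 - th) *\<^sub>R p1 + th *\<^sub>R p2) \<ge> (1 - th) * ell p1 + th * ell p2"
      using concave_onD[OF ell_concave th] pos by auto
    hence ce: "ell t \<ge> (1 - th) * ell p1 + th * ell p2" using teq by simp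
    have "L t \<ge> (1 - th) * L p1 + th * L p2"
      using ce unfolding L_def teq by (simp add: algebra_simps)
    moreover have "(1 - th) * L p1 + th * L p2 \<ge> (1 - th) * min (L p1) (L p2) + th * min (L p1) (L p2)"
      using th by (intro add_mono mult_left_mono) auto
    moreover have "(1 - th) * min (L p1) (L p2) + th * min (L p1) (L p2) = min (L p1) (L p2)"
      by (simp add: algebra_simps)
    ultimately have "L t > 0" using L1 by linarith
    moreover have "t > 0" using pos le by simp
    ultimately show ?thesis using iffL by (simp add: P_def)
  qed
  have convA: "\<forall>p1\<in>P. \<forall>p2\<in>P. \<forall>t. p1 \<le> t \<longrightarrow> t \<le> p2 \<longrightarrow> t \<in> P"
    using conv by blast
  have notP: "Gf t - \<phi> t \<le> 0" if "t > 0" "t \<notin> P" for t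
    using that by (auto simp: P_def)
  have inP: "Gf t - \<phi> t > 0" if "t \<in> P" for t
    using that by (auto simp: P_def)
  have pw: "t ^ (q - 1) * (t ^ 2 * E * W) = t ^ (q + 1) * E * W"
           "t ^ (q - 1) * (t * (t ^ 2 * E * W)) = t ^ (q + 2) * E * W"
           "t ^ (q - 1) * (t * (t * (t ^ 2 * E * W))) = t ^ (q + 3) * E * W"
           "t ^ (q - 1 + 1) = t * t ^ (q - 1)" "t ^ (q - 1 + 2) = t * (t * t ^ (q - 1))" for t E W :: real
  proof -
    have pa: "t ^ (q + k) = t ^ (q - 1) * t ^ (Suc k)" for k
      using qp by (simp add: power_add[symmetric])
    show "t ^ (q - 1) * (t ^ 2 * E * W) = t ^ (q + 1) * E * W"
      by (subst pa[of 1]) (simp add: power2_eq_square mult_ac)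
    show "t ^ (q - 1) * (t * (t ^ 2 * E * W)) = t ^ (q + 2) * E * W"
      by (subst pa[of 2]) (simp add: power2_eq_square mult_ac eval_nat_numeral)
    show "t ^ (q - 1) * (t * (t * (t ^ 2 * E * W))) = t ^ (q + 3) * E * W"
      by (subst pa[of 3]) (simp add: power2_eq_square mult_ac eval_nat_numeral)
    show "t ^ (q - 1 + 1) = t * t ^ (q - 1)" by simp
    show "t ^ (q - 1 + 2) = t * (t * t ^ (q - 1))" by (simp add: numeral_2_eq_2)
  qed
  have pws: "t ^ (q+1+0) = t*t*t^(q-1)" "t ^ (q+1+1) = t*t*t*t^(q-1)" "t ^ (q+1+2) = t*t*t*t*t^(q-1)"
     "t ^ (q-1+0) = t^(q-1)" "t ^ (q-1+1) = t*t^(q-1)" "t ^ (q-1+2) = t*t*t^(q-1)" for t :: real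
    unfolding qp by (simp_all add: eval_nat_numeral)
  have key: "\<exists>a b. 0 \<le> a \<and> a \<le> b \<and> (\<forall>t>0. (t - a) * (t - b) * (Gf t - \<phi> t) \<le> 0)"
  proof (cases "P = {}")
    case True
    show ?thesis
    proof (rule exI[of _ 0], rule exI[of _ 0], intro conjI allI impI)
      fix t :: real assume "t > 0"
      hence "Gf t - \<phi> t \<le> 0" using notP True by auto
      thus "(t - 0) * (t - 0) * (Gf t - \<phi> t) \<le> 0" by (simp add: mult_nonneg_nonpos)
    qed auto
  next
    case ne: False
    show ?thesis
    proof (cases "bdd_above P")
      case bdd: True
      note I = interval_bdd[OF Psub ne bdd convA]
      show ?thesis
      proof (rule exI[of _ "Inf P"], rule exI[of _ "Sup P"], intro conjI allI impI)
        show "0 \<le> Inf P" by (rule I(1))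
        show "Inf P \<le> Sup P" by (rule I(2))
        fix t :: real assume t: "t > 0"
        consider (c1) "Inf P < t" "t < Sup P" | (c2) "t = Inf P" | (c2') "t = Sup P" | (c3) "t < Inf P" | (c4) "Sup P < t"
          by linarith
        thus "(t - Inf P) * (t - Sup P) * (Gf t - \<phi> t) \<le> 0"
        proof cases
          case c1
          have "(t - Inf P) * (t - Sup P) < 0" using c1 by (intro mult_pos_neg) auto
          moreover have "t \<in> P" by (rule I(3)[OF c1])
          hence "Gf t - \<phi> t > 0" by (rule inP)
          ultimately show ?thesis by (simp add: mult_neg_pos less_imp_le)
        next
          case c2 thus ?thesis by simp
        next
          case c2' thus ?thesis by simp
        next
          case c3
          have "(t - Inf P) * (t - Sup P) \<ge> 0" using c3 I(2) by (intro mult_nonpos_nonpos) auto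
          moreover have "t \<notin> P" by (rule I(4)[OF c3])
          hence "Gf t - \<phi> t \<le> 0" using notP t by blast
          ultimately show ?thesis by (simp add: mult_nonneg_nonpos)
        next
          case c4
          have "(t - Inf P) * (t - Sup P) \<ge> 0" using c4 I(2) by (intro mult_nonneg_nonneg) auto
          moreover have "t \<notin> P" by (rule I(5)[OF c4])
          hence "Gf t - \<phi> t \<le> 0" using notP t by blast
          ultimately show ?thesis by (simp add: mult_nonneg_nonpos)
        qed
      qed
    next
      case unb: False
      note I = interval_unbdd[OF Psub ne unb convA]
      define a where "a = Inf P"
      define Psi0 where "Psi0 t = t ^ (q - 1) * ((t - a) * (Gf t - \<phi> t))" for t
      have Psi0_nn: "Psi0 t \<ge> 0" if "t > 0" for t
      proof -
        have "(t - a) * (Gf t - \<phi> t) \<ge> 0"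
        proof (cases "t > a")
          case True thus ?thesis using inP I(2) a_def by (auto intro!: mult_nonneg_nonneg less_imp_le)
        next
          case False
          show ?thesis
          proof (cases "t = a")
            case False
            hence "t < a" using \<open>\<not> t > a\<close> by simp
            hence "Gf t - \<phi> t \<le> 0" using notP I(3) a_def that by auto
            thus ?thesis using \<open>t < a\<close> by (intro mult_nonpos_nonpos) auto
          qed simp
        qed
        thus ?thesis unfolding Psi0_def using that by simp
      qed
      obtain pp where pp: "pp \<in> P" "pp > a + 1" using unb unfolding bdd_above_def by (meson not_le)
      have ppos: "pp > 0" using pp Psub by auto
      have Psi0p: "Psi0 pp > 0"
        unfolding Psi0_def using inP[OF pp(1)] pp(2) ppos by (intro mult_pos_pos) auto
      have cont: "isCont Psi0 pp"
      proof -
        have "1 - exp (- pp) \<noteq> 0" using ppos by simp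
        thus ?thesis unfolding Psi0_def Gf_def \<phi>_def w_def by (intro continuous_intros) auto
      qed
      have "\<forall>\<^sub>F t in at pp. Psi0 pp / 2 < Psi0 t"
        using cont Psi0p unfolding isCont_def by (intro order_tendstoD) auto
      then obtain d where d: "d > 0" "\<And>t. t \<noteq> pp \<Longrightarrow> dist t pp < d \<Longrightarrow> Psi0 pp / 2 < Psi0 t"
        unfolding eventually_at by auto
      define r where "r = min d pp / 2"
      have r: "r > 0" "r < d" "r < pp" using d ppos by (auto simp: r_def)
      have near: "Psi0 pp / 2 < Psi0 t" if "t \<in> {pp - r .. pp + r}" for t
      proof (cases "t = pp")
        case True thus ?thesis using Psi0p by simp
      next
        case False thus ?thesis using d(2)[of t] that r by (auto simp: dist_real_def)
      qed
      define Psi where "Psi t = (IG 1 t - a * IG 0 t) - (IP 1 t - a * IP 0 t)" for t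
      have HPsi: "has_bochner_integral lborel Psi ((M1 - a * M0) - (M1 - a * M0))"
        unfolding Psi_def
        by (intro has_bochner_integral_diff has_bochner_integral_mult_right HG0 HG1 HP0 HP1)
      have Psi_eq: "Psi t = indicator {0<..} t * Psi0 t" for t
      proof (cases "t > 0")
        case True
        hence ind: "indicator {0<..} t = (1::real)" by simp
        show ?thesis unfolding Psi_def IG_def IP_def Psi0_def Gf_def \<phi>_def pws ind
          by (simp add: algebra_simps power2_eq_square)
      qed (simp add: Psi_def IG_def IP_def)
      define B where "B t = Psi0 pp / 2 * indicator {pp - r .. pp + r} t" for t
      have intB: "integrable lborel B" unfolding B_def by (intro integrable_mult_right integrable_real_indicator) (auto simp: emeasure_lborel_Icc_eq)
      have intPsi: "integrable lborel Psi" using HPsi by (simp add: has_bochner_integral_iff)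
      have "integral\<^sup>L lborel B \<le> integral\<^sup>L lborel Psi"
      proof (rule integral_mono[OF intB intPsi])
        fix t :: real
        show "B t \<le> Psi t"
        proof (cases "t \<in> {pp - r .. pp + r}")
          case True
          hence "t > 0" using r by auto
          thus ?thesis using near[OF True] True by (simp add: B_def Psi_eq)
        next
          case False
          have "0 \<le> Psi t" using Psi0_nn by (cases "t > 0") (auto simp: Psi_eq)
          thus ?thesis using False by (simp add: B_def)
        qed
      qed
      moreover have "integral\<^sup>L lborel B = Psi0 pp / 2 * (2 * r)"
        unfolding B_def using r by simp
      moreover have "integral\<^sup>L lborel Psi = 0" using HPsi by (simp add: has_bochner_integral_iff)
      ultimately have False using Psi0p r by (simp add: mult_pos_pos) (smt (verit) mult_pos_pos)
      thus ?thesis ..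
    qed
  qed
  then obtain a b where ab: "0 \<le> a" "a \<le> b" "\<And>t. t > 0 \<Longrightarrow> (t - a) * (t - b) * (Gf t - \<phi> t) \<le> 0" by blast
  define Phi where "Phi t = (IG 2 t - (a + b) * IG 1 t + (a * b) * IG 0 t)
        - (IP 2 t - (a + b) * IP 1 t + (a * b) * IP 0 t)" for t
  have HPhi: "has_bochner_integral lborel Phi
     ((M2 - (a + b) * M1 + (a * b) * M0) - (real (q+1) * M1^2 / (real q * M0) - (a + b) * M1 + (a * b) * M0))"
    unfolding Phi_def
    by (intro has_bochner_integral_diff has_bochner_integral_add has_bochner_integral_mult_right HG0 HG1 HG2 HP0 HP1 HP2)
  have Phi_eq: "Phi t = indicator {0<..} t * (t ^ (q - 1) * ((t - a) * (t - b) * (Gf t - \<phi> t)))" for t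
  proof (cases "t > 0")
    case True
    hence ind: "indicator {0<..} t = (1::real)" by simp
    show ?thesis unfolding Phi_def IG_def IP_def Gf_def \<phi>_def pws ind
      by (simp add: algebra_simps power2_eq_square)
  qed (simp add: Phi_def IG_def IP_def)
  have "integral\<^sup>L lborel Phi \<le> 0"
  proof -
    have "0 \<le> integral\<^sup>L lborel (\<lambda>t. - Phi t)"
    proof (rule integral_nonneg_AE, rule AE_I2)
      fix t :: real
      show "0 \<le> - Phi t"
      proof (cases "t > 0")
        case True
        have "t ^ (q - 1) * ((t - a) * (t - b) * (Gf t - \<phi> t)) \<le> 0"
          by (rule mult_nonneg_nonpos[OF _ ab(3)[OF True]]) (use True in simp)
        thus ?thesis using True by (simp add: Phi_eq)
      qed (simp add: Phi_eq)
    qed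
    thus ?thesis by simp
  qed
  hence "M2 \<le> real (q+1) * M1^2 / (real q * M0)"
    using HPhi by (simp add: has_bochner_integral_iff)
  hence main: "real q * M0 * M2 \<le> real (q+1) * M1^2"
    using Mp q by (simp add: field_simps)
  have f2: "fact (q+2) = real (q+2) * fact (q+1)" by (simp add: fact_Suc[of "q+1", simplified])
  have f3: "fact (q+3) = real (q+3) * real (q+2) * fact (q+1)"
    by (simp add: eval_nat_numeral fact_Suc)
  have fpos: "(fact (q+1) :: real) > 0" by simp
  have "real (q+2) * fact (q+1) ^ 2 * (real q * real (q+3) * (S (q+2) x * S (q+4) x))
       \<le> real (q+2) * fact (q+1) ^ 2 * (real (q+1) * real (q+2) * S (q+3) x ^ 2)"
    using main unfolding M0_def M1_def M2_def f2 f3 by (simp add: algebra_simps power2_eq_square)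
  thus ?thesis using fpos by (simp add: mult_le_cancel_left_pos)
qed


lemma strict_convex_from_deriv:
  fixes g g1 g2 :: "real \<Rightarrow> real"
  assumes d1: "\<And>x. x > 0 \<Longrightarrow> (g has_real_derivative g1 x) (at x)"
    and d2: "\<And>x. x > 0 \<Longrightarrow> (g1 has_real_derivative g2 x) (at x)"
    and pos: "\<And>x. x > 0 \<Longrightarrow> g2 x > 0"
  shows "strictly_convex_on {0<..} g"
proof -
  have mono: "g1 u < g1 v" if uv: "0 < u" "u < v" for u v
  proof -
    obtain z where z: "u < z" "z < v" "g1 v - g1 u = (v - u) * g2 z"
      using MVT2[OF uv(2), of g1 g2] d2 uv by force
    have "(v - u) * g2 z > 0" using z uv pos[of z] by simp
    thus ?thesis using z by simp
  qed
  have main: "g ((1 - t) * x + t * y) < (1 - t) * g x + t * g y"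
    if xy: "0 < x" "x < y" and t: "0 < t" "t < 1" for x y t
  proof -
    define z where "z = (1 - t) * x + t * y"
    have zx: "z - x = t * (y - x)" "y - z = (1 - t) * (y - x)" by (simp_all add: z_def algebra_simps)
    have p1: "t * (y - x) > 0" "(1 - t) * (y - x) > 0" using t xy by simp_all
    have xz1: "x < z" by (metis diff_gt_0_iff_gt zx(1) p1(1))
    have xz2: "z < y" by (metis diff_gt_0_iff_gt zx(2) p1(2))
    note xz = xz1 xz2
    obtain a where a: "x < a" "a < z" "g z - g x = (z - x) * g1 a"
      using MVT2[OF xz(1), of g g1] d1 xy by force
    obtain b where b: "z < b" "b < y" "g y - g z = (y - z) * g1 b"
      using MVT2[OF xz(2), of g g1] d1 xy xz by force
    have "g1 a < g1 b" using mono a b xy by simp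
    hence h: "(1 - t) * t * (y - x) * g1 a < (1 - t) * t * (y - x) * g1 b"
      using t xy by (intro mult_strict_left_mono) auto
    have e1: "(1 - t) * (g z - g x) = (1 - t) * t * (y - x) * g1 a"
      by (simp add: a(3) zx(1) mult.assoc)
    have e2: "t * (g y - g z) = (1 - t) * t * (y - x) * g1 b"
      by (simp add: b(3) zx(2) mult.assoc mult.left_commute)
    have ineq: "(1 - t) * (g z - g x) < t * (g y - g z)" unfolding e1 e2 by (rule h)
    have "(1 - t) * (g z - g x) = g z - g x - t * g z + t * g x"
         "t * (g y - g z) = t * g y - t * g z" by (simp_all add: algebra_simps)
    hence "g z < (1 - t) * g x + t * g y" using ineq by (simp add: algebra_simps)
    thus ?thesis unfolding z_def .
  qed
  show ?thesis unfolding strictly_convex_on_def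
  proof (intro conjI ballI allI impI)
    show "convex {0::real<..}" by simp
    fix x y t :: real assume "x \<in> {0<..}" "y \<in> {0<..}" "x \<noteq> y" "0 < t" "t < 1"
    thus "g ((1 - t) * x + t * y) < (1 - t) * g x + t * g y"
    proof (cases "x < y")
      case True thus ?thesis using main \<open>x \<in> _\<close> \<open>0 < t\<close> \<open>t < 1\<close> by auto
    next
      case False
      hence "y < x" using \<open>x \<noteq> y\<close> by simp
      hence "g ((1 - (1 - t)) * y + (1 - t) * x) < (1 - (1 - t)) * g y + (1 - t) * g x"
        using main \<open>y \<in> _\<close> \<open>0 < t\<close> \<open>t < 1\<close> by (intro main) auto
      thus ?thesis by (simp add: algebra_simps)
    qed
  qed
qed

lemma coefl: "0 < (a::real) \<Longrightarrow> 0 < b \<Longrightarrow> (1 - a / (a + 2 * b)) * ((a/2) / (a + b)) + a / (a + 2 * b) = a / (a + b)"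
proof -
  assume ab: "0 < a" "0 < b"
  obtain D1 D2 where D: "D1 = a + 2 * b" "D2 = a + b" by simp
  have nz: "D1 > 0" "D2 > 0" using ab D by auto
  have e: "1 - a / D1 = 2 * b / D1" using nz D by (simp add: field_simps)
  have "(1 - a / D1) * ((a/2) / D2) + a / D1 = (2 * b / D1) * ((a/2) / D2) + a / D1" by (simp only: e)
  also have "\<dots> = (a * b + a * D2) / (D1 * D2)"
    using nz by (simp add: field_simps)
  also have "a * b + a * D2 = a * D1" using D by (simp add: algebra_simps)
  also have "a * D1 / (D1 * D2) = a / D2" using nz by simp
  finally show ?thesis using D by simp
qed

lemma superadd:
  fixes g :: "real \<Rightarrow> real"
  assumes sc: "strictly_convex_on {0<..} g" and lim: "(g \<longlongrightarrow> 0) (at_right 0)"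
    and x: "x > 0" and y: "y > 0"
  shows "g x + g y < g (x + y)"
proof -
  have SC: "g ((1 - s) * a + s * b) < (1 - s) * g a + s * g b"
    if "0 < a" "0 < b" "a \<noteq> b" "0 < s" "s < 1" for a b s
    using sc that unfolding strictly_convex_on_def by auto
  have H: "g u \<le> u / v * g v" if uv: "0 < u" "u < v" for u v
  proof -
    have ev: "\<forall>\<^sub>F e in at_right 0. g u \<le> ((v - u) * g e + (u - e) * g v) / (v - e)"
    proof -
      have "\<forall>\<^sub>F e in at_right (0::real). e < u"
        using uv by (auto simp: eventually_at_right_field intro!: exI[of _ u])
      moreover have "\<forall>\<^sub>F e in at_right (0::real). 0 < e" by (rule eventually_at_right_less)
      ultimately show ?thesis
      proof eventually_elim
        case (elim e)
        define s where "s = (u - e) / (v - e)"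
        have s: "0 < s" "s < 1" using elim uv by (auto simp: s_def divide_simps)
        have d: "s * (v - e) = u - e" using elim uv by (simp add: s_def)
        have ue: "u = (1 - s) * e + s * v" using d by (simp add: algebra_simps; linarith)
        have "g u < (1 - s) * g e + s * g v" unfolding ue using SC[of e v s] elim uv s by auto
        also have "\<dots> = (v - u) / (v - e) * g e + (u - e) / (v - e) * g v"
        proof -
          have "1 - s = (v - u) / (v - e)" using elim uv by (simp add: s_def field_simps)
          thus ?thesis by (simp add: s_def)
        qed
        also have "\<dots> = ((v - u) * g e + (u - e) * g v) / (v - e)"
          by (simp only: add_divide_distrib times_divide_eq_left)
        finally show ?case by simp
      qed
    qed
    have "((\<lambda>e. ((v - u) * g e + (u - e) * g v) / (v - e)) \<longlongrightarrow> ((v - u) * 0 + (u - 0) * g v) / (v - 0)) (at_right 0)"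
      using uv by (intro tendsto_intros lim) auto
    hence "g u \<le> ((v - u) * 0 + (u - 0) * g v) / (v - 0)"
      by (rule tendsto_lowerbound[OF _ ev]) simp
    thus ?thesis by simp
  qed
  have half: "g a < a / (a + b) * g (a + b)" if ab: "0 < a" "0 < b" for a b
  proof -
    define s where "s = a / (a + 2 * b)"
    have s: "0 < s" "s < 1" using ab by (auto simp: s_def divide_simps)
    have d: "s * (a/2 + b) = a/2" using ab by (simp add: s_def field_simps)
    have "(1 - s) * (a/2) + s * (a + b) = a/2 + s * (a/2 + b)" by (simp add: field_simps)
    hence ae: "a = (1 - s) * (a/2) + s * (a + b)" using d by simp
    have coef: "(1 - s) * ((a/2) / (a + b)) + s = a / (a + b)"
      using coefl[OF ab] unfolding s_def .
    have "g a < (1 - s) * g (a/2) + s * g (a + b)"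
      using SC[of "a/2" "a+b" s] ab s ae by simp
    also have "\<dots> \<le> (1 - s) * ((a/2) / (a + b) * g (a + b)) + s * g (a + b)"
      using H[of "a/2" "a+b"] ab s by (intro add_mono mult_left_mono) auto
    also have "\<dots> = ((1 - s) * ((a/2) / (a + b)) + s) * g (a + b)"
      by (simp add: algebra_simps)
    also have "\<dots> = a / (a + b) * g (a + b)" using coef by simp
    finally show ?thesis .
  qed
  have "g x + g y < x / (x + y) * g (x + y) + y / (y + x) * g (y + x)"
    using half[OF x y] half[OF y x] by simp
  also have "\<dots> = g (x + y)"
  proof -
    have c: "x / (x + y) + y / (x + y) = 1" using x y by (simp add: add_divide_distrib[symmetric])
    have "x / (x + y) * g (x + y) + y / (y + x) * g (y + x) = (x / (x + y) + y / (x + y)) * g (x + y)"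
      by (simp add: add.commute distrib_right)
    thus ?thesis using c by simp
  qed
  finally show ?thesis .
qed


lemma quad_aux:
  assumes z: "(z::real) > 0"
  shows "A / z^j - 2 * l * (A / z ^ Suc j) + l^2 * (A / z ^ (j+2)) = A / z^j * (1 - l / z)^2"
proof -
  obtain P where P: "P = z ^ j" by simp
  have Pp: "P \<noteq> 0" "z \<noteq> 0" using P z by auto
  have e: "z ^ Suc j = P * z" "z ^ (j + 2) = P * z * z" using P by (simp_all add: algebra_simps)
  show ?thesis unfolding e P[symmetric] using Pp by (simp add: field_simps power2_eq_square)
qed

lemma S_CS:
  assumes x: "x > 0" and j: "j \<ge> 3"
  shows "S (Suc j) x ^ 2 \<le> S j x * S (j + 2) x"
proof -
  define a where "a i k = (1 + real k) / (x + real k) ^ i" for i k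
  have sa: "summable (a i)" if "i \<ge> 3" for i unfolding a_def using summable_S[OF x that] .
  have S1: "S j x > 0" "S (j+2) x > 0" using S_pos x j by auto
  define l where "l = S (Suc j) x / S (j+2) x"
  have sums: "(\<lambda>k. a j k - 2 * l * a (Suc j) k + l^2 * a (j+2) k) sums (S j x - 2 * l * S (Suc j) x + l^2 * S (j+2) x)"
    unfolding S_def a_def[symmetric]
    using j by (intro sums_add sums_diff sums_mult summable_sums sa) auto
  have nn: "a j k - 2 * l * a (Suc j) k + l^2 * a (j+2) k \<ge> 0" for k
  proof -
    have xk: "x + real k > 0" using x by simp
    have "a j k - 2 * l * a (Suc j) k + l^2 * a (j+2) k = a j k * (1 - l / (x + real k))^2"
      unfolding a_def using quad_aux[OF xk] by simp
    also have "\<dots> \<ge> 0" unfolding a_def using xk by simp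
    finally show ?thesis .
  qed
  have le0: "0 \<le> S j x - 2 * l * S (Suc j) x + l^2 * S (j+2) x"
    by (rule sums_le[OF _ sums_zero sums]) (use nn in simp)
  have e1: "l * S (Suc j) x = S (Suc j) x ^ 2 / S (j+2) x" by (simp add: l_def power2_eq_square)
  have e2: "l^2 * S (j+2) x = S (Suc j) x ^ 2 / S (j+2) x" using S1 by (simp add: l_def power2_eq_square)
  have "S (Suc j) x ^ 2 / S (j+2) x \<le> S j x" using le0 e1 e2 by (simp add: mult.assoc)
  hence "S (Suc j) x ^ 2 / S (j+2) x * S (j+2) x \<le> S j x * S (j+2) x"
    using S1 by (intro mult_right_mono) auto
  thus ?thesis using S1 by simp
qed


definition fF :: "nat \<Rightarrow> real \<Rightarrow> real" where "fF n x = fact n * S (n+1) x"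
definition f1 :: "nat \<Rightarrow> real \<Rightarrow> real" where "f1 n x = - (fact n * real (n+1) * S (n+2) x)"
definition f2 :: "nat \<Rightarrow> real \<Rightarrow> real" where "f2 n x = fact n * real (n+1) * real (n+2) * S (n+3) x"

lemma fF_pos: "n \<ge> 2 \<Longrightarrow> x > 0 \<Longrightarrow> fF n x > 0"
  unfolding fF_def using S_pos[of x "n+1"] by simp

lemma fF_deriv: assumes "n \<ge> 2" "x > 0" shows "(fF n has_real_derivative f1 n x) (at x)"
proof -
  have "((\<lambda>x. fact n * S (n+1) x) has_real_derivative fact n * (- real (n+1) * S (Suc (n+1)) x)) (at x)"
    using assms by (intro DERIV_cmult DERIV_S) auto
  thus ?thesis unfolding fF_def[abs_def] f1_def by (rule DERIV_cong) (simp add: algebra_simps)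
qed

lemma f1_deriv: assumes "n \<ge> 2" "x > 0" shows "(f1 n has_real_derivative f2 n x) (at x)"
proof -
  have "((\<lambda>x. - (fact n * real (n+1) * S (n+2) x)) has_real_derivative - (fact n * real (n+1) * (- real (n+2) * S (Suc (n+2)) x))) (at x)"
    using assms by (intro DERIV_minus DERIV_cmult DERIV_S) auto
  thus ?thesis unfolding f1_def[abs_def] f2_def by (rule DERIV_cong) (simp add: algebra_simps numeral_3_eq_3)
qed

lemma G_deriv1: assumes "n \<ge> 2" "x > 0"
  shows "((\<lambda>x. fF n x powr r) has_real_derivative (r * fF n x powr (r - 1) * f1 n x)) (at x)"
  using DERIV_chain2[OF has_real_derivative_powr[OF fF_pos[OF assms]] fF_deriv[OF assms]] by simp

lemma G_deriv2: assumes "n \<ge> 2" "x > 0"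
  shows "((\<lambda>x. r * fF n x powr (r - 1) * f1 n x) has_real_derivative
     (r * ((r - 1) * fF n x powr (r - 2) * f1 n x * f1 n x + fF n x powr (r - 1) * f2 n x))) (at x)"
proof -
  have d: "((\<lambda>x. fF n x powr (r - 1)) has_real_derivative ((r - 1) * fF n x powr (r - 1 - 1) * f1 n x)) (at x)"
    using DERIV_chain2[OF has_real_derivative_powr[OF fF_pos[OF assms], of "r - 1"] fF_deriv[OF assms]] by simp
  have "((\<lambda>x. r * (fF n x powr (r - 1) * f1 n x)) has_real_derivative
     r * ((r - 1) * fF n x powr (r - 1 - 1) * f1 n x * f1 n x + f2 n x * fF n x powr (r - 1))) (at x)"
    by (intro DERIV_cmult DERIV_mult d f1_deriv assms)
  thus ?thesis by (simp add: mult_ac)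
qed

definition K :: "nat \<Rightarrow> real \<Rightarrow> real \<Rightarrow> real" where
  "K n r x = (r - 1) * real (n+1) * S (n+2) x ^ 2 + real (n+2) * S (n+1) x * S (n+3) x"

lemma Gd2_eq: assumes "n \<ge> 2" "x > 0"
  shows "r * ((r - 1) * fF n x powr (r - 2) * f1 n x * f1 n x + fF n x powr (r - 1) * f2 n x)
       = r * fF n x powr (r - 2) * ((fact n)^2 * real (n+1) * K n r x)"
proof -
  have F: "fF n x > 0" by (rule fF_pos[OF assms])
  have p: "fF n x powr (r - 1) = fF n x powr (r - 2) * fF n x"
  proof -
    have "fF n x powr (r - 2) * fF n x = fF n x powr (r - 2) * fF n x powr 1" using F by simp
    also have "\<dots> = fF n x powr (r - 2 + 1)" by (rule powr_add[symmetric])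
    finally show ?thesis by simp
  qed
  show ?thesis
    apply (subst p)
    unfolding K_def f1_def f2_def fF_def
    by (simp add: algebra_simps power2_eq_square)
qed


lemma psi_rel: "(-1) ^ (n + 1) * psi2 n x = fF n x"
proof -
  have "(-1::real) ^ (n+1) * (-1) ^ (n+1) = ((-1) * (-1)) ^ (n+1)" by (rule power_mult_distrib[symmetric])
  also have "((-1::real) * (-1)) ^ (n+1) = 1" by simp
  finally have e: "(-1::real) ^ (n+1) * (-1) ^ (n+1) = 1" .
  have "(-1) ^ (n + 1) * psi2 n x = ((-1::real) ^ (n+1) * (-1) ^ (n+1)) * (fact n * S (n+1) x)"
    unfolding psi2_def S_def by (simp only: mult.assoc)
  thus ?thesis using e by (simp add: fF_def)
qed

lemma G_eq: "G n r = (\<lambda>x. fF n x powr r)"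
  unfolding G_def[abs_def] psi_rel ..

lemma K_pos:
  assumes n: "n \<ge> 3" and x: "x > 0" and r: "r > - 1 / (real n + 1)"
  shows "K n r x > 0"
proof -
  have cs: "S (n+2) x ^ 2 \<le> S (n+1) x * S (n+3) x"
    using S_CS[OF x, of "n+1"] n by (simp add: numeral_3_eq_3)
  have Yp: "S (n+2) x ^ 2 > 0" using S_pos[OF x, of "n+2"] n by simp
  have r1: "r * (real n + 1) + 1 > 0"
    using r by (simp add: field_simps)
  have "real (n+2) * (S (n+2) x ^ 2) \<le> real (n+2) * (S (n+1) x * S (n+3) x)"
    using cs by (intro mult_left_mono) auto
  hence "K n r x \<ge> (r - 1) * real (n+1) * S (n+2) x ^ 2 + real (n+2) * S (n+2) x ^ 2"
    unfolding K_def by (simp add: mult.assoc)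
  also have "(r - 1) * real (n+1) * S (n+2) x ^ 2 + real (n+2) * S (n+2) x ^ 2
       = (r * (real n + 1) + 1) * S (n+2) x ^ 2" by (simp add: algebra_simps)
  finally show ?thesis using r1 Yp by (smt (verit) mult_pos_pos)
qed

lemma K_neg:
  assumes n: "n \<ge> 3" and x: "x > 0" and r: "r < - 1 / (real n - 1)"
  shows "K n r x < 0"
proof -
  note h0 = hard[of "n - 1" x]
  have e: "n - 1 + 2 = n + 1" "n - 1 + 3 = n + 2" "n - 1 + 4 = n + 3" "n - 1 + 1 = n" using n by auto
  have rn: "real (n - 1) = real n - 1" using n by simp
  have hd: "(real n - 1) * real (n+2) * (S (n+1) x * S (n+3) x) \<le> real n * real (n+1) * S (n+2) x ^ 2"
    using h0 n x unfolding e rn by simp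
  have Yp: "S (n+2) x ^ 2 > 0" using S_pos[OF x, of "n+2"] n by simp
  have n1: "real n - 1 > 0" using n by simp
  have r1: "(real n - 1) * r + 1 < 0"
    using r n1 by (simp add: field_simps)
  have "(real n - 1) * K n r x = (real n - 1) * (r - 1) * real (n+1) * S (n+2) x ^ 2
        + (real n - 1) * real (n+2) * (S (n+1) x * S (n+3) x)"
    unfolding K_def by (simp add: algebra_simps)
  also have "\<dots> \<le> (real n - 1) * (r - 1) * real (n+1) * S (n+2) x ^ 2 + real n * real (n+1) * S (n+2) x ^ 2"
    using hd by simp
  also have "\<dots> = (real n + 1) * S (n+2) x ^ 2 * ((real n - 1) * r + 1)"
    by (simp add: algebra_simps)
  also have "\<dots> < 0" using Yp r1 by (intro mult_pos_neg) auto
  finally have "(real n - 1) * K n r x < 0" .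
  thus ?thesis using n1 by (simp add: mult_less_0_iff)
qed

lemma G_lim:
  assumes n: "n \<ge> 2" and r: "r < 0"
  shows "((\<lambda>x. fF n x powr r) \<longlongrightarrow> 0) (at_right 0)"
proof (rule tendsto_sandwich[where f = "\<lambda>_. 0" and h = "\<lambda>x. (fact n * inverse x) powr r"])
  show "\<forall>\<^sub>F x in at_right 0. 0 \<le> fF n x powr r" by simp
  show "((\<lambda>_. 0::real) \<longlongrightarrow> 0) (at_right 0)" by simp
  have "LIM x at_right (0::real). (fact n :: real) * inverse x :> at_top"
    using filterlim_tendsto_pos_mult_at_top[of "\<lambda>_. fact n" "fact n" "at_right (0::real)" inverse]
      filterlim_inverse_at_top_right by simp
  thus "((\<lambda>x. (fact n * inverse x) powr r) \<longlongrightarrow> 0) (at_right 0)"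
    by (rule tendsto_neg_powr[OF r])
  have "\<forall>\<^sub>F x in at_right (0::real). x < 1"
    by (auto simp: eventually_at_right_field intro!: exI[of _ 1])
  moreover have "\<forall>\<^sub>F x in at_right (0::real). 0 < x" by (rule eventually_at_right_less)
  ultimately show "\<forall>\<^sub>F x in at_right 0. fF n x powr r \<le> (fact n * inverse x) powr r"
  proof eventually_elim
    case (elim x)
    have "x ^ (n+1) \<le> x ^ 1" using elim by (intro power_decreasing) auto
    hence "inverse x \<le> 1 / x ^ (n+1)" using elim by (simp add: divide_simps)
    also have "\<dots> \<le> S (n+1) x" using S_ge_first[of x "n+1"] elim n by simp
    finally have "fact n * inverse x \<le> fF n x" unfolding fF_def by (intro mult_left_mono) auto
    thus ?case using elim r by (intro powr_mono2') auto
  qed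
qed

theorem theorem3p5:
  fixes n :: nat
  assumes "n \<ge> 3"
  shows "(\<forall>r::real. (r < - 1 / (real n - 1) \<or> r > 0) \<longrightarrow>
            strictly_convex_on {0<..} (G n r))
       \<and> (\<forall>r::real. - 1 / (real n + 1) < r \<and> r < 0 \<longrightarrow>
            strictly_concave_on {0<..} (G n r))
       \<and> (\<forall>r::real. \<forall>x y::real. r < - 1 / (real n - 1) \<and> x > 0 \<and> y > 0 \<longrightarrow>
            ((-1) ^ (n + 1) * psi2 n x) powr r + ((-1) ^ (n + 1) * psi2 n y) powr r
              < ((-1) ^ (n + 1) * psi2 n (x + y)) powr r)
       \<and> (\<forall>r::real. \<forall>x y::real. - 1 / (real n + 1) < r \<and> r < 0 \<and> x > 0 \<and> y > 0 \<longrightarrow>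
            ((-1) ^ (n + 1) * psi2 n x) powr r + ((-1) ^ (n + 1) * psi2 n y) powr r
              > ((-1) ^ (n + 1) * psi2 n (x + y)) powr r)"
proof -
  have n3: "n \<ge> 3" by fact
  hence n2: "n \<ge> 2" by simp
  have n1: "real n - 1 > 0" using n3 by simp
  have conv: "strictly_convex_on {0<..} (G n r)" if r: "r < - 1 / (real n - 1) \<or> r > 0" for r
  proof -
    have "strictly_convex_on {0<..} (\<lambda>x. fF n x powr r)"
    proof (rule strict_convex_from_deriv[of _ "\<lambda>x. r * fF n x powr (r - 1) * f1 n x"
          "\<lambda>x. r * ((r - 1) * fF n x powr (r - 2) * f1 n x * f1 n x + fF n x powr (r - 1) * f2 n x)"])
      fix x :: real assume x: "x > 0"
      show "((\<lambda>x. fF n x powr r) has_real_derivative r * fF n x powr (r - 1) * f1 n x) (at x)"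
        by (rule G_deriv1[OF n2 x])
      show "((\<lambda>x. r * fF n x powr (r - 1) * f1 n x) has_real_derivative
          r * ((r - 1) * fF n x powr (r - 2) * f1 n x * f1 n x + fF n x powr (r - 1) * f2 n x)) (at x)"
        by (rule G_deriv2[OF n2 x])
      have P: "fF n x powr (r - 2) > 0" using fF_pos[OF n2 x] by simp
      have C: "(fact n :: real)^2 * real (n+1) > 0" by simp
      have neg1: "- 1 / (real n - 1) < 0" using n1 by simp
      have neg2: "- 1 / (real n + 1) < 0" by (simp add: add_pos_pos)
      have "r * fF n x powr (r - 2) * ((fact n)^2 * real (n+1) * K n r x) > 0"
        using r
      proof
        assume rn: "r < - 1 / (real n - 1)"
        have "r < 0" using rn neg1 by linarith
        hence a: "r * fF n x powr (r - 2) < 0" by (rule mult_neg_pos[OF _ P])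
        have b: "(fact n)^2 * real (n+1) * K n r x < 0" by (rule mult_pos_neg[OF C K_neg[OF n3 x rn]])
        show ?thesis by (rule mult_neg_neg[OF a b])
      next
        assume rp: "r > 0"
        have "r > - 1 / (real n + 1)" using rp neg2 by linarith
        hence "K n r x > 0" by (rule K_pos[OF n3 x])
        hence b: "(fact n)^2 * real (n+1) * K n r x > 0" by (rule mult_pos_pos[OF C])
        have a: "r * fF n x powr (r - 2) > 0" by (rule mult_pos_pos[OF rp P])
        show ?thesis by (rule mult_pos_pos[OF a b])
      qed
      thus "0 < r * ((r - 1) * fF n x powr (r - 2) * f1 n x * f1 n x + fF n x powr (r - 1) * f2 n x)"
        unfolding Gd2_eq[OF n2 x] .
    qed
    thus ?thesis unfolding G_eq .
  qed
  have conc: "strictly_concave_on {0<..} (G n r)" if r: "- 1 / (real n + 1) < r" "r < 0" for r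
  proof -
    have "strictly_convex_on {0<..} (\<lambda>x. - (fF n x powr r))"
    proof (rule strict_convex_from_deriv[of _ "\<lambda>x. - (r * fF n x powr (r - 1) * f1 n x)"
          "\<lambda>x. - (r * ((r - 1) * fF n x powr (r - 2) * f1 n x * f1 n x + fF n x powr (r - 1) * f2 n x))"])
      fix x :: real assume x: "x > 0"
      show "((\<lambda>x. - (fF n x powr r)) has_real_derivative - (r * fF n x powr (r - 1) * f1 n x)) (at x)"
        by (rule DERIV_minus[OF G_deriv1[OF n2 x]])
      show "((\<lambda>x. - (r * fF n x powr (r - 1) * f1 n x)) has_real_derivative
          - (r * ((r - 1) * fF n x powr (r - 2) * f1 n x * f1 n x + fF n x powr (r - 1) * f2 n x))) (at x)"
        by (rule DERIV_minus[OF G_deriv2[OF n2 x]])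
      have P: "fF n x powr (r - 2) > 0" using fF_pos[OF n2 x] by simp
      have C: "(fact n :: real)^2 * real (n+1) > 0" by simp
      have a: "r * fF n x powr (r - 2) < 0" by (rule mult_neg_pos[OF r(2) P])
      have b: "(fact n)^2 * real (n+1) * K n r x > 0" by (rule mult_pos_pos[OF C K_pos[OF n3 x r(1)]])
      have "r * fF n x powr (r - 2) * ((fact n)^2 * real (n+1) * K n r x) < 0"
        by (rule mult_neg_pos[OF a b])
      thus "0 < - (r * ((r - 1) * fF n x powr (r - 2) * f1 n x * f1 n x + fF n x powr (r - 1) * f2 n x))"
        unfolding Gd2_eq[OF n2 x] by simp
    qed
    thus ?thesis unfolding strictly_concave_on_def G_eq .
  qed
  have p3: "G n r x + G n r y < G n r (x + y)"
    if r: "r < - 1 / (real n - 1)" and x: "x > 0" and y: "y > 0" for r x y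
  proof -
    have "- 1 / (real n - 1) < 0" using n1 by simp
    hence "r < 0" using r by linarith
    hence lim: "(G n r \<longlongrightarrow> 0) (at_right 0)" unfolding G_eq by (rule G_lim[OF n2])
    show ?thesis by (rule superadd[OF conv lim x y]) (use r in simp)
  qed
  have p4: "G n r x + G n r y > G n r (x + y)"
    if r: "- 1 / (real n + 1) < r" "r < 0" and x: "x > 0" and y: "y > 0" for r x y
  proof -
    have lim: "((\<lambda>x. - G n r x) \<longlongrightarrow> 0) (at_right 0)"
      using tendsto_minus[OF G_lim[OF n2 r(2)]] unfolding G_eq by simp
    have "strictly_convex_on {0<..} (\<lambda>x. - G n r x)"
      using conc[OF r] unfolding strictly_concave_on_def .
    from superadd[OF this lim x y] show ?thesis by simp
  qed
  show ?thesis
    using conv conc p3 p4 unfolding G_def by blast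
qed

end
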